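(* Let $\tau_1(x)=\frac{x+1}{x+3}$ and $\tau_2(x)=\frac{2}{4-x}$ on $[0,1]$ (so $\tau_1([0,1])=[1/3,1/2]$, $\tau_2([0,1])=[1/2,2/3]$), and let $A_1(y)=\frac12\left(\log\frac{2}{(y-1)^2}+\log 2\right)$ (used on $\tau_1([0,1])$) and $A_2(y)=\frac12\left(\log\frac{2}{y^2}+\log 2\right)$ (used on $\tau_2([0,1])$). Let $b=\frac{3+\sqrt{17}}{2}$ and $V(x)=\max\{\log(x+b),\log(1-x+b)\}$. Then for every $x\in[0,1]$, $$V(x)+\log b=\max\{A_1(\tau_1(x))+V(\tau_1(x)),\,A_2(\tau_2(x))+V(\tau_2(x))\},$$ i.e. $V$ is a subaction for this potential with maximal value $m(A)=\log\left(\frac{3+\sqrt{17}}{2}\right)$.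
   Context: This is the potential associated (in the ergodic-optimization approach to the joint spectral radius) with the pair of matrices $A_1=\begin{pmatrix}2&1\\2&2\end{pmatrix}$, $A_2=\begin{pmatrix}2&2\\1&2\end{pmatrix}$, whose projective actions on $[0,1]$ are $\tau_1,\tau_2$. Here "subaction with constant $c$" means a continuous $V$ satisfying $V(x)+c=\max_{i}[A_i(\tau_i(x))+V(\tau_i(x))]$ for all $x$. *)

theory Defs
  imports Complex_Main
begin

definition tau1 :: "real \<Rightarrow> real" where
  "tau1 x = (x + 1) / (x + 3)"

definition tau2 :: "real \<Rightarrow> real" where
  "tau2 x = 2 / (4 - x)"

definition A1 :: "real \<Rightarrow> real" where
  "A1 y = (ln (2 / (y - 1)^2) + ln 2) / 2"

definition A2 :: "real \<Rightarrow> real" where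
  "A2 y = (ln (2 / y^2) + ln 2) / 2"

definition bconst :: real where
  "bconst = (3 + sqrt 17) / 2"

definition V :: "real \<Rightarrow> real" where
  "V x = max (ln (x + bconst)) (ln (1 - x + bconst))"

end

theory Submission
  imports Defs
begin

lemma b_pos: "bconst > 0" unfolding bconst_def
  by (simp add: add_pos_nonneg)

lemma b_sq: "bconst^2 = 3*bconst + 2"
  unfolding bconst_def by (simp add: power2_eq_square algebra_simps)

lemma part1:
  fixes x :: real assumes "0 \<le> x" "x \<le> 1"
  shows "A1 (tau1 x) + V (tau1 x) = ln (bconst*x + 3*bconst + 2)"
proof -
  have b: "bconst > 0" by (rule b_pos)
  let ?y = "tau1 x"
  have y: "?y = (x+1)/(x+3)" by (simp add: tau1_def)
  have y1: "1 - ?y = 2/(x+3)" using assms by (simp add: y field_simps)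
  have yle: "?y \<le> 1/2" using assms by (simp add: y field_simps)
  have yge: "?y \<ge> 0" using assms by (simp add: y)
  have "2 / (?y - 1)^2 = (x+3)^2/2"
  proof -
    have "(?y - 1)^2 = (1 - ?y)^2" by (simp add: power2_commute)
    thus ?thesis using y1 assms by (simp add: field_simps power2_eq_square)
  qed
  hence "A1 ?y = (ln ((x+3)^2/2) + ln 2)/2" unfolding A1_def by (rule arg_cong[where f="\<lambda>t. (ln t + ln 2)/2"])
  also have "ln ((x+3)^2/2) + ln 2 = ln ((x+3)^2)"
    using assms by (simp add: ln_div)
  also have "ln ((x+3)^2) = 2 * ln (x+3)" using assms by (simp add: ln_realpow)
  finally have a: "A1 ?y = ln (x+3)" by simp
  have "V ?y = ln (1 - ?y + bconst)" unfolding V_def using yle yge b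
    by (intro max_absorb2) simp
  hence "A1 ?y + V ?y = ln ((x+3) * (1 - ?y + bconst))"
    using a assms b yle by (simp add: ln_mult)
  also have "(x+3) * (1 - ?y + bconst) = bconst*x + 3*bconst + 2"
    using assms by (simp add: y field_simps)
  finally show ?thesis .
qed

lemma part2:
  fixes x :: real assumes "0 \<le> x" "x \<le> 1"
  shows "A2 (tau2 x) + V (tau2 x) = ln (4*bconst + 2 - bconst*x)"
proof -
  have b: "bconst > 0" by (rule b_pos)
  let ?y = "tau2 x"
  have y: "?y = 2/(4-x)" by (simp add: tau2_def)
  have yge: "?y \<ge> 1/2" using assms by (simp add: y field_simps)
  have ypos: "?y > 0" using assms by (simp add: y)
  have "2 / ?y^2 = (4-x)^2/2"
    using assms by (simp add: y field_simps power2_eq_square)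
  hence "A2 ?y = (ln ((4-x)^2/2) + ln 2)/2" unfolding A2_def by (rule arg_cong[where f="\<lambda>t. (ln t + ln 2)/2"])
  also have "ln ((4-x)^2/2) + ln 2 = ln ((4-x)^2)"
    using assms by (simp add: ln_div)
  also have "ln ((4-x)^2) = 2 * ln (4-x)" using assms by (simp add: ln_realpow)
  finally have a: "A2 ?y = ln (4-x)" by simp
  have yle1: "?y \<le> 1" using assms by (simp add: y field_simps)
  have "V ?y = ln (?y + bconst)" unfolding V_def using yge ypos b yle1
    by (intro max_absorb1) simp
  hence "A2 ?y + V ?y = ln ((4-x) * (?y + bconst))"
    using a assms b ypos by (simp add: ln_mult)
  also have "(4-x) * (?y + bconst) = 4*bconst + 2 - bconst*x"
    using assms by (simp add: y field_simps)
  finally show ?thesis .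
qed

lemma max_ln: "a > 0 \<Longrightarrow> c > 0 \<Longrightarrow> max (ln a) (ln c) = ln (max a (c::real))"
  by (cases "a \<le> c") (auto simp: max_def)

theorem mainTheorem3:
  fixes x :: real
  assumes "0 \<le> x" and "x \<le> 1"
  shows "V x + ln bconst = max (A1 (tau1 x) + V (tau1 x)) (A2 (tau2 x) + V (tau2 x))"
proof -
  have b: "bconst > 0" by (rule b_pos)
  have "V x + ln bconst = max (ln ((x + bconst)*bconst)) (ln ((1 - x + bconst)*bconst))"
    unfolding V_def using assms b by (simp add: ln_mult max_add_distrib_left)
  also have "(x + bconst)*bconst = bconst*x + 3*bconst + 2"
    using b_sq by (simp add: power2_eq_square algebra_simps)
  also have "(1 - x + bconst)*bconst = 4*bconst + 2 - bconst*x"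
    using b_sq by (simp add: power2_eq_square algebra_simps)
  finally show ?thesis using part1[OF assms] part2[OF assms] by simp
qed

end
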